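(* Let $G$ be a connected twin-free bipartite graph of order $n \ge 2$. Then $i_{\max}(G) \ge \lceil n/2\rceil+1$, and this inequality is sharp.
   Context: $i_{\max}(G)$ denotes the number of maximal independent sets of $G$. A graph is twin-free if no two vertices have the same open neighbourhood. *)

theory Defs
  imports Complex_Main
begin

definition simple_graph :: "'a set \<Rightarrow> ('a \<Rightarrow> 'a \<Rightarrow> bool) \<Rightarrow> bool" where
  "simple_graph V E \<longleftrightarrow> finite V \<and> (\<forall>u v. E u v \<longrightarrow> u \<in> V \<and> v \<in> V)
     \<and> (\<forall>u v. E u v \<longrightarrow> E v u) \<and> (\<forall>v. \<not> E v v)"

definition connected_graph :: "'a set \<Rightarrow> ('a \<Rightarrow> 'a \<Rightarrow> bool) \<Rightarrow> bool" where
  "connected_graph V E \<longleftrightarrow> V \<noteq> {} \<and>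
     (\<forall>u\<in>V. \<forall>v\<in>V. (\<lambda>x y. x \<in> V \<and> y \<in> V \<and> E x y)\<^sup>*\<^sup>* u v)"

definition bipartite :: "'a set \<Rightarrow> ('a \<Rightarrow> 'a \<Rightarrow> bool) \<Rightarrow> bool" where
  "bipartite V E \<longleftrightarrow> (\<exists>A B. A \<union> B = V \<and> A \<inter> B = {} \<and>
     (\<forall>u v. E u v \<longrightarrow> (u \<in> A \<and> v \<in> B) \<or> (u \<in> B \<and> v \<in> A)))"

definition open_nbhd :: "'a set \<Rightarrow> ('a \<Rightarrow> 'a \<Rightarrow> bool) \<Rightarrow> 'a \<Rightarrow> 'a set" where
  "open_nbhd V E v = {u \<in> V. E v u}"

definition twin_free :: "'a set \<Rightarrow> ('a \<Rightarrow> 'a \<Rightarrow> bool) \<Rightarrow> bool" where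
  "twin_free V E \<longleftrightarrow> (\<forall>u\<in>V. \<forall>v\<in>V. u \<noteq> v \<longrightarrow> open_nbhd V E u \<noteq> open_nbhd V E v)"

definition independent_set :: "'a set \<Rightarrow> ('a \<Rightarrow> 'a \<Rightarrow> bool) \<Rightarrow> 'a set \<Rightarrow> bool" where
  "independent_set V E S \<longleftrightarrow> S \<subseteq> V \<and> (\<forall>u\<in>S. \<forall>v\<in>S. \<not> E u v)"

definition maximal_independent_set :: "'a set \<Rightarrow> ('a \<Rightarrow> 'a \<Rightarrow> bool) \<Rightarrow> 'a set \<Rightarrow> bool" where
  "maximal_independent_set V E S \<longleftrightarrow> independent_set V E S \<and>
     (\<forall>T. independent_set V E T \<and> S \<subseteq> T \<longrightarrow> T = S)"

definition i_max :: "'a set \<Rightarrow> ('a \<Rightarrow> 'a \<Rightarrow> bool) \<Rightarrow> nat" where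
  "i_max V E = card {S. maximal_independent_set V E S}"

end

theory Submission
  imports Defs
begin

lemma lower_aux:
  assumes sg: "simple_graph V E" and tf: "twin_free V E"
    and AB: "A \<union> B = V" "A \<inter> B = {}"
    and edges: "\<forall>u v. E u v \<longrightarrow> (u \<in> A \<and> v \<in> B) \<or> (u \<in> B \<and> v \<in> A)"
    and nb: "\<forall>a\<in>A. \<exists>b. E a b"
  shows "card A + 1 \<le> i_max V E"
proof -
  have finV: "finite V" using sg by (simp add: simple_graph_def)
  have sym: "\<And>u v. E u v \<Longrightarrow> E v u" and inV: "\<And>u v. E u v \<Longrightarrow> u \<in> V \<and> v \<in> V"
    using sg by (auto simp: simple_graph_def)
  define N where "N a = open_nbhd V E a" for a
  define I where "I a = {a'\<in>A. N a' \<subseteq> N a} \<union> (B - N a)" for a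
  have NB: "a \<in> A \<Longrightarrow> N a \<subseteq> B" for a
    using edges AB by (auto simp: N_def open_nbhd_def)
  have fin: "finite {S. maximal_independent_set V E S}"
    by (rule finite_subset[of _ "Pow V"])
       (use finV in \<open>auto simp: maximal_independent_set_def independent_set_def\<close>)
  have misI: "maximal_independent_set V E (I a)" if a: "a \<in> A" for a
  proof -
    have ind: "independent_set V E (I a)"
      unfolding independent_set_def
    proof (intro conjI ballI)
      show "I a \<subseteq> V" using AB by (auto simp: I_def)
    next
      fix u v assume u: "u \<in> I a" and v: "v \<in> I a"
      show "\<not> E u v"
      proof
        assume e: "E u v"
        from edges e have "(u \<in> A \<and> v \<in> B) \<or> (u \<in> B \<and> v \<in> A)" by blast
        then show False
        proof
          assume h: "u \<in> A \<and> v \<in> B"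
          then have "N u \<subseteq> N a" "v \<notin> N a" using u v AB by (auto simp: I_def)
          moreover have "v \<in> N u" using e inV by (auto simp: N_def open_nbhd_def)
          ultimately show False by blast
        next
          assume h: "u \<in> B \<and> v \<in> A"
          then have "N v \<subseteq> N a" "u \<notin> N a" using u v AB by (auto simp: I_def)
          moreover have "u \<in> N v" using sym[OF e] inV e by (auto simp: N_def open_nbhd_def)
          ultimately show False by blast
        qed
      qed
    qed
    have "T = I a" if T: "independent_set V E T" "I a \<subseteq> T" for T
    proof (rule ccontr)
      assume "T \<noteq> I a"
      then obtain x where x: "x \<in> T" "x \<notin> I a" using T by blast
      have aT: "a \<in> T" using T a by (auto simp: I_def)
      have xV: "x \<in> V" using T x by (auto simp: independent_set_def)
      show False
      proof (cases "x \<in> A")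
        case True
        then have "\<not> N x \<subseteq> N a" using x by (auto simp: I_def)
        then obtain b where b: "b \<in> N x" "b \<notin> N a" by blast
        have "b \<in> B" using NB[OF True] b by blast
        then have "b \<in> T" using b T by (auto simp: I_def)
        moreover have "E x b" using b by (auto simp: N_def open_nbhd_def)
        ultimately show False using T x by (auto simp: independent_set_def)
      next
        case False
        then have "x \<in> B" using xV AB by blast
        then have "x \<in> N a" using x by (auto simp: I_def)
        then have "E a x" by (auto simp: N_def open_nbhd_def)
        then show False using T x aT by (auto simp: independent_set_def)
      qed
    qed
    then show ?thesis using ind by (auto simp: maximal_independent_set_def)
  qed
  have misB: "maximal_independent_set V E B"
  proof -
    have ind: "independent_set V E B"
      using AB edges by (auto simp: independent_set_def)
    have "T = B" if T: "independent_set V E T" "B \<subseteq> T" for T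
    proof (rule ccontr)
      assume "T \<noteq> B"
      then obtain x where x: "x \<in> T" "x \<notin> B" using T by blast
      have "x \<in> A" using x T AB by (auto simp: independent_set_def)
      then obtain b where b: "E x b" using nb by blast
      then have "b \<in> B" using edges \<open>x \<in> A\<close> AB by blast
      then show False using T x b by (auto simp: independent_set_def)
    qed
    then show ?thesis using ind by (auto simp: maximal_independent_set_def)
  qed
  have inj: "inj_on I A"
  proof (rule inj_onI)
    fix a a' assume a: "a \<in> A" and a': "a' \<in> A" and eq: "I a = I a'"
    have "I a \<inter> B = B - N a" "I a' \<inter> B = B - N a'" using AB by (auto simp: I_def)
    then have "B - N a = B - N a'" using eq by simp
    then have "N a = N a'" using NB[OF a] NB[OF a'] by blast
    then show "a = a'" using tf a a' AB by (auto simp: twin_free_def N_def)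
  qed
  have notin: "B \<notin> I ` A"
  proof
    assume "B \<in> I ` A"
    then obtain a where a: "a \<in> A" "B = I a" by blast
    then have "a \<in> I a" by (auto simp: I_def)
    then show False using a AB by auto
  qed
  have sub: "insert B (I ` A) \<subseteq> {S. maximal_independent_set V E S}"
    using misI misB by auto
  have finA: "finite A" using finV AB by auto
  have "card (insert B (I ` A)) = card A + 1"
    using notin inj finA by (simp add: card_image)
  then show ?thesis unfolding i_max_def using card_mono[OF fin sub] by simp
qed


lemma part1:
  assumes sg: "simple_graph V E" and co: "connected_graph V E" and tf: "twin_free V E"
    and bp: "bipartite V E" and c2: "card V \<ge> 2"
  shows "\<lceil>real (card V) / 2\<rceil> + 1 \<le> int (i_max V E)"
proof -
  have finV: "finite V" using sg by (simp add: simple_graph_def)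
  have nb: "\<exists>w. E v w" if v: "v \<in> V" for v
  proof -
    have "\<not> V \<subseteq> {v}"
    proof
      assume "V \<subseteq> {v}"
      then have "card V \<le> card {v}" by (intro card_mono) auto
      then show False using c2 by simp
    qed
    then obtain u where u: "u \<in> V" "u \<noteq> v" by blast
    have "(\<lambda>x y. x \<in> V \<and> y \<in> V \<and> E x y)\<^sup>*\<^sup>* v u" using co v u by (auto simp: connected_graph_def)
    then show ?thesis
      by (rule converse_rtranclpE) (use u in auto)
  qed
  obtain A B where AB: "A \<union> B = V" "A \<inter> B = {}"
    and edges: "\<forall>u v. E u v \<longrightarrow> (u \<in> A \<and> v \<in> B) \<or> (u \<in> B \<and> v \<in> A)"
    using bp by (auto simp: bipartite_def)
  have l1: "card A + 1 \<le> i_max V E"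
    by (rule lower_aux[OF sg tf AB edges]) (use nb AB in auto)
  have l2: "card B + 1 \<le> i_max V E"
    by (rule lower_aux[OF sg tf, of B A]) (use nb AB edges in auto)
  have "card A + card B = card V" using AB finV by (metis card_Un_disjoint finite_Un)
  then have "real (card V) / 2 \<le> real (max (card A) (card B))" by auto
  then have "\<lceil>real (card V) / 2\<rceil> \<le> int (max (card A) (card B))"
    by (simp add: ceiling_le_iff)
  then show ?thesis using l1 l2 by linarith
qed


definition HE :: "nat \<Rightarrow> nat \<Rightarrow> nat \<Rightarrow> bool" where
  "HE k x y \<longleftrightarrow> (x < k \<and> k \<le> y \<and> y < 2*k \<and> x + k \<le> y) \<or> (y < k \<and> k \<le> x \<and> x < 2*k \<and> y + k \<le> x)"

lemma half_props:
  assumes k: "k \<ge> 1"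
  shows "simple_graph {0..<2*k} (HE k) \<and> connected_graph {0..<2*k} (HE k)
    \<and> twin_free {0..<2*k} (HE k) \<and> bipartite {0..<2*k} (HE k)"
proof (intro conjI)
  show "simple_graph {0..<2*k} (HE k)" by (auto simp: simple_graph_def HE_def)
  show "bipartite {0..<2*k} (HE k)" unfolding bipartite_def
    by (rule exI[of _ "{0..<k}"], rule exI[of _ "{k..<2*k}"]) (auto simp: HE_def)
  let ?R = "\<lambda>x y. x \<in> {0..<2*k} \<and> y \<in> {0..<2*k} \<and> HE k x y"
  have r1: "?R\<^sup>*\<^sup>* v 0 \<and> ?R\<^sup>*\<^sup>* 0 v" if v: "v \<in> {0..<2*k}" for v
  proof (cases "v < k")
    case True
    have a: "?R v (2*k-1)" "?R (2*k-1) 0" "?R 0 (2*k-1)" "?R (2*k-1) v"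
      using True k by (auto simp: HE_def)
    have "?R\<^sup>*\<^sup>* v 0"
      by (rule converse_rtranclp_into_rtranclp[of ?R, OF a(1)]) (rule r_into_rtranclp[of ?R, OF a(2)])
    moreover have "?R\<^sup>*\<^sup>* 0 v"
      by (rule converse_rtranclp_into_rtranclp[of ?R, OF a(3)]) (rule r_into_rtranclp[of ?R, OF a(4)])
    ultimately show ?thesis by blast
  next
    case False
    have a: "?R v 0" "?R 0 v" using False v k by (auto simp: HE_def)
    then show ?thesis by auto
  qed
  show "connected_graph {0..<2*k} (HE k)" unfolding connected_graph_def
  proof (intro conjI ballI)
    show "{0..<2*k} \<noteq> {}" using k by auto
    fix u v assume "u \<in> {0..<2*k}" "v \<in> {0..<2*k}"
    then show "?R\<^sup>*\<^sup>* u v" using r1 by (meson rtranclp_trans)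
  qed
  show "twin_free {0..<2*k} (HE k)" unfolding twin_free_def
  proof (intro ballI impI)
    fix u v assume u: "u \<in> {0..<2*k}" and v: "v \<in> {0..<2*k}" and uv: "u \<noteq> v"
    let ?N = "open_nbhd {0..<2*k} (HE k)"
    have key: "\<exists>w. (w \<in> ?N u) \<noteq> (w \<in> ?N v)" if "u < v" "u \<in> {0..<2*k}" "v \<in> {0..<2*k}" for u v
    proof (cases "v < k")
      case True
      then show ?thesis using that by (intro exI[of _ "u + k"]) (auto simp: HE_def open_nbhd_def)
    next
      case vB: False
      show ?thesis
      proof (cases "u < k")
        case True
        then show ?thesis using that vB by (intro exI[of _ "2*k-1"]) (auto simp: HE_def open_nbhd_def)
      next
        case False
        then show ?thesis using that vB by (intro exI[of _ "v - k"]) (auto simp: HE_def open_nbhd_def)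
      qed
    qed
    show "?N u \<noteq> ?N v"
    proof (cases "u < v")
      case True then show ?thesis using key[OF True u v] by metis
    next
      case False then have "v < u" using uv by simp
      then show ?thesis using key[OF _ v u] by metis
    qed
  qed
qed

definition HM :: "nat \<Rightarrow> nat \<Rightarrow> nat set" where
  "HM k t = {i. t \<le> i \<and> i < k} \<union> {j. k \<le> j \<and> j < k + t}"

lemma half_upper:
  assumes k: "k \<ge> 1"
  shows "i_max {0..<2*k} (HE k) \<le> k + 1"
proof -
  have sub: "{S. maximal_independent_set {0..<2*k} (HE k) S} \<subseteq> HM k ` {0..k}"
  proof
    fix I assume "I \<in> {S. maximal_independent_set {0..<2*k} (HE k) S}"
    then have ind: "independent_set {0..<2*k} (HE k) I"
      and max: "\<And>T. independent_set {0..<2*k} (HE k) T \<Longrightarrow> I \<subseteq> T \<Longrightarrow> T = I"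
      by (auto simp: maximal_independent_set_def)
    define t where "t = (if \<exists>i\<in>I. i < k then LEAST i. i \<in> I \<and> i < k else k)"
    have tk: "t \<le> k"
    proof (cases "\<exists>i\<in>I. i < k")
      case True
      then have "(LEAST i. i \<in> I \<and> i < k) < k"
        using LeastI_ex[of "\<lambda>i. i \<in> I \<and> i < k"] by blast
      then show ?thesis using True by (simp add: t_def)
    next
      case False then show ?thesis by (simp add: t_def)
    qed
    have A1: "i \<in> I \<Longrightarrow> i < k \<Longrightarrow> t \<le> i" for i
      unfolding t_def using Least_le[of "\<lambda>i. i \<in> I \<and> i < k" i] by auto
    have tI: "t < k \<Longrightarrow> t \<in> I"
      unfolding t_def using LeastI_ex[of "\<lambda>i. i \<in> I \<and> i < k"] by (auto split: if_splits)
    have IV: "I \<subseteq> {0..<2*k}" using ind by (simp add: independent_set_def)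
    have "I \<subseteq> HM k t"
    proof
      fix x assume x: "x \<in> I"
      show "x \<in> HM k t"
      proof (cases "x < k")
        case True then show ?thesis using A1 x by (auto simp: HM_def)
      next
        case False
        have "x < k + t"
        proof (rule ccontr)
          assume "\<not> x < k + t"
          then have "t < k" using x IV by auto
          then have "t \<in> I" using tI by simp
          moreover have "HE k t x" using \<open>\<not> x < k + t\<close> \<open>t < k\<close> x IV False by (auto simp: HE_def)
          ultimately show False using ind x by (auto simp: independent_set_def)
        qed
        then show ?thesis using False by (auto simp: HM_def)
      qed
    qed
    moreover have "independent_set {0..<2*k} (HE k) (HM k t)"
      using tk by (auto simp: independent_set_def HM_def HE_def)
    ultimately have "HM k t = I" using max by blast
    then show "I \<in> HM k ` {0..k}" using tk by auto
  qed
  have "i_max {0..<2*k} (HE k) \<le> card (HM k ` {0..k})"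
    unfolding i_max_def by (rule card_mono[OF _ sub]) simp
  also have "\<dots> \<le> card {0..k}" by (rule card_image_le) simp
  finally show ?thesis by simp
qed

theorem theorem1p3:
  shows "(\<forall>(V :: 'a set) E. simple_graph V E \<and> connected_graph V E \<and> twin_free V E
            \<and> bipartite V E \<and> card V \<ge> 2
            \<longrightarrow> \<lceil>real (card V) / 2\<rceil> + 1 \<le> int (i_max V E))
       \<and> (\<forall>N. \<exists>(V :: nat set) E. simple_graph V E \<and> connected_graph V E \<and> twin_free V E
            \<and> bipartite V E \<and> card V \<ge> 2 \<and> card V \<ge> N
            \<and> int (i_max V E) = \<lceil>real (card V) / 2\<rceil> + 1)"
proof (intro conjI allI impI)
  fix V :: "'a set" and E
  assume "simple_graph V E \<and> connected_graph V E \<and> twin_free V E \<and> bipartite V E \<and> card V \<ge> 2"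
  then show "\<lceil>real (card V) / 2\<rceil> + 1 \<le> int (i_max V E)" using part1 by blast
next
  fix N :: nat
  define k where "k = max 1 N"
  have k: "k \<ge> 1" "k \<ge> N" by (auto simp: k_def)
  have P: "simple_graph {0..<2*k} (HE k) \<and> connected_graph {0..<2*k} (HE k)
    \<and> twin_free {0..<2*k} (HE k) \<and> bipartite {0..<2*k} (HE k)" using half_props[OF k(1)] .
  have c: "card {0..<2*k} = 2*k" by simp
  have ce: "\<lceil>real (2*k) / 2\<rceil> = int k" by simp
  have lo: "\<lceil>real (card {0..<2*k}) / 2\<rceil> + 1 \<le> int (i_max {0..<2*k} (HE k))"
    using part1[of "{0..<2*k}" "HE k"] P c k by auto
  have up: "i_max {0..<2*k} (HE k) \<le> k + 1" using half_upper[OF k(1)] .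
  have "int (i_max {0..<2*k} (HE k)) = \<lceil>real (card {0..<2*k}) / 2\<rceil> + 1"
    using lo up c ce by linarith
  then show "\<exists>(V :: nat set) E. simple_graph V E \<and> connected_graph V E \<and> twin_free V E
            \<and> bipartite V E \<and> card V \<ge> 2 \<and> card V \<ge> N
            \<and> int (i_max V E) = \<lceil>real (card V) / 2\<rceil> + 1"
    using P c k by (intro exI[of _ "{0..<2*k}"] exI[of _ "HE k"]) auto
qed

end
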